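(* Let $d\ge1$, $\eta>0$, and let $\mathcal{D}$ be the distribution on $\mathbb{R}^d\times\{-1,+1\}$ with $y$ uniform on $\{-1,+1\}$, $\bm{\mu}=(\eta,\dots,\eta)$, $\bm{x}\mid y=+1\sim\mathcal{N}(\bm{\mu},I)$ and $\bm{x}\mid y=-1\sim\mathcal{N}(-\bm{\mu},I)$. Let $0<\epsilon_{-1}<\epsilon_{+1}<\eta$. Consider linear classifiers $f(\bm{x})=\operatorname{sign}(\bm{w}^\top\bm{x}+b)$ with $\|\bm{w}\|_2=1$, $b\in\mathbb{R}$. Let $f_{nat}$ minimize the standard error $\Pr(f(\bm{x})\ne y)$, and let $f_{rob}$ minimize the class-dependent robust error $\Pr(\exists\bm{\delta},\ \|\bm{\delta}\|_\infty\le\epsilon_y:\ f(\bm{x}+\bm{\delta})\neq y)$ (adversarial training where perturbations of examples of class $y$ are bounded by $\epsilon_y$). With $\mathcal{R}_{nat}(f\mid y)=\Pr(f(\bm{x})\neq y\mid y)$, we have $$\mathcal{R}_{nat}(f_{nat}\mid -1)<\mathcal{R}_{nat}(f_{rob}\mid -1),\qquad \mathcal{R}_{nat}(f_{nat}\mid +1)>\mathcal{R}_{nat}(f_{rob}\mid +1).$$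
   Context: $I$ denotes the $d\times d$ identity matrix. *)

theory Defs
  imports "HOL-Probability.Probability"
begin

text \<open>Vectors in R^d are functions 'n \<Rightarrow> real over a finite index type 'n (d = CARD('n)).\<close>

definition inner_f :: "('n::finite \<Rightarrow> real) \<Rightarrow> ('n \<Rightarrow> real) \<Rightarrow> real" where
  "inner_f w x = (\<Sum>i\<in>UNIV. w i * x i)"

definition l2norm :: "('n::finite \<Rightarrow> real) \<Rightarrow> real" where
  "l2norm w = sqrt (\<Sum>i\<in>UNIV. (w i)\<^sup>2)"

definition linf_norm :: "('n::finite \<Rightarrow> real) \<Rightarrow> real" where
  "linf_norm v = Max (range (\<lambda>i. \<bar>v i\<bar>))"

definition lin_clf :: "('n::finite \<Rightarrow> real) \<Rightarrow> real \<Rightarrow> ('n \<Rightarrow> real) \<Rightarrow> real" where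
  "lin_clf w b x = sgn (inner_f w x + b)"

definition cond_dist :: "real \<Rightarrow> real \<Rightarrow> ('n::finite \<Rightarrow> real) measure" where
  "cond_dist eta y = PiM UNIV (\<lambda>i. density lborel (normal_density (y * eta) 1))"

definition nat_err_cond :: "real \<Rightarrow> ('n::finite \<Rightarrow> real) \<Rightarrow> real \<Rightarrow> real \<Rightarrow> real" where
  "nat_err_cond eta w b y = measure (cond_dist eta y) {x. lin_clf w b x \<noteq> y}"

definition nat_err :: "real \<Rightarrow> ('n::finite \<Rightarrow> real) \<Rightarrow> real \<Rightarrow> real" where
  "nat_err eta w b = (1/2) * nat_err_cond eta w b 1 + (1/2) * nat_err_cond eta w b (-1)"

definition rob_err_cond :: "real \<Rightarrow> real \<Rightarrow> ('n::finite \<Rightarrow> real) \<Rightarrow> real \<Rightarrow> real \<Rightarrow> real" where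
  "rob_err_cond eta epsy w b y =
     measure (cond_dist eta y) {x. \<exists>\<delta>. linf_norm \<delta> \<le> epsy \<and> lin_clf w b (\<lambda>i. x i + \<delta> i) \<noteq> y}"

text \<open>Robust error Pr(\<exists>\<delta>, |\<delta>|_inf \<le> eps_y. f(x+\<delta>) \<noteq> y), eps_{+1} = ep, eps_{-1} = em.\<close>
definition rob_err :: "real \<Rightarrow> real \<Rightarrow> real \<Rightarrow> ('n::finite \<Rightarrow> real) \<Rightarrow> real \<Rightarrow> real" where
  "rob_err eta em ep w b = (1/2) * rob_err_cond eta ep w b 1 + (1/2) * rob_err_cond eta em w b (-1)"

end

theory Submission imports Defs begin

definition Phi :: "real \<Rightarrow> real" where
  "Phi x = measure (density lborel std_normal_density) {..x}"

lemma std_prob: "prob_space (density lborel std_normal_density)"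
  by (rule prob_space_normal_density) simp

lemma measure_std_int:
  assumes "A \<in> sets borel"
  shows "measure (density lborel std_normal_density) A = (LBINT t:A. std_normal_density t)"
proof -
  interpret P: prob_space "density lborel std_normal_density" by (rule std_prob)
  have "measure (density lborel std_normal_density) A = integral\<^sup>L (density lborel std_normal_density) (indicator A)"
    using assms by simp
  also have "\<dots> = (LINT x|lborel. std_normal_density x *\<^sub>R indicator A x)"
    by (rule integral_density) (auto intro: borel_measurable_indicator assms)
  also have "\<dots> = (LBINT t:A. std_normal_density t)"
    by (simp add: set_lebesgue_integral_def mult.commute)
  finally show ?thesis .
qed

lemma Phi_diff:
  assumes "a \<le> b"
  shows "Phi b - Phi a = (LBINT t=a..b. std_normal_density t)"
proof -
  interpret P: prob_space "density lborel std_normal_density" by (rule std_prob)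
  have "{..b} = {..a} \<union> {a<..b}" using assms by auto
  then have "Phi b = Phi a + measure (density lborel std_normal_density) {a<..b}"
    unfolding Phi_def by (subst P.finite_measure_Union[symmetric]) auto
  then show ?thesis using assms by (simp add: measure_std_int interval_integral_Ioc)
qed

lemma Phi_alt: "Phi x = Phi 0 + (LBINT t=0..x. std_normal_density t)"
proof (cases "0 \<le> x")
  case True then show ?thesis using Phi_diff[of 0 x] by (simp add: zero_ereal_def)
next
  case False
  have "(LBINT t=0..x. std_normal_density t) = - (LBINT t=x..0. std_normal_density t)"
    by (rule interval_integral_endpoints_reverse)
  then show ?thesis using Phi_diff[of x 0] False
    by (simp add: zero_ereal_def)
qed

lemma cont_std: "continuous_on A std_normal_density"
  unfolding normal_density_def by (intro continuous_intros) auto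

lemma DERIV_Phi: "(Phi has_real_derivative std_normal_density x) (at x)"
proof -
  have "(at x within {min 0 (x - 1)..max 0 (x + 1)}) = at x"
    by (intro at_within_interior) auto
  moreover have "min 0 (x - 1) \<le> x" "x \<le> max 0 (x + 1)"
    by auto
  ultimately have D: "((\<lambda>u. LBINT t=0..u. std_normal_density t) has_real_derivative std_normal_density x) (at x)"
    using interval_integral_FTC2[of "min 0 (x - 1)" 0 "max 0 (x + 1)" std_normal_density x]
    by (auto simp: cont_std zero_ereal_def has_real_derivative_iff_has_vector_derivative
             split del: if_split)
  have "((\<lambda>u. Phi 0 + (LBINT t=0..u. std_normal_density t)) has_real_derivative std_normal_density x) (at x)"
    using DERIV_add[OF DERIV_const[of "Phi 0" "at x"] D] by simp
  moreover have "(\<lambda>u. Phi 0 + (LBINT t=0..u. std_normal_density t)) = Phi"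
    by (rule ext, rule Phi_alt[symmetric])
  ultimately show ?thesis by (simp only:)
qed

lemma Phi_strict_mono: "a < b \<Longrightarrow> Phi a < Phi b"
  by (rule DERIV_pos_imp_increasing[of a b Phi]) (auto intro!: DERIV_Phi normal_density_pos)


lemma std_even: "std_normal_density (- x) = std_normal_density x"
  by (simp add: normal_density_def)

lemma std_less: "u\<^sup>2 < v\<^sup>2 \<Longrightarrow> std_normal_density v < std_normal_density u"
proof -
  assume "u\<^sup>2 < v\<^sup>2"
  then have "exp (- v\<^sup>2 / 2) < exp (- u\<^sup>2 / 2)" by simp
  then show ?thesis unfolding std_normal_density_def by (intro mult_strict_left_mono) auto
qed

lemma std_le: "u\<^sup>2 \<le> v\<^sup>2 \<Longrightarrow> std_normal_density v \<le> std_normal_density u"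
  using std_less[of u v] by (cases "u\<^sup>2 = v\<^sup>2") (auto simp: std_normal_density_def)

definition g :: "real \<Rightarrow> real \<Rightarrow> real" where
  "g s b = Phi (- s - b) + Phi (- s + b)"

lemma DERIV_g: "((\<lambda>b. g s b) has_real_derivative
    (std_normal_density (b - s) - std_normal_density (b + s))) (at b)"
proof -
  have 1: "((\<lambda>b. Phi (- s - b)) has_real_derivative std_normal_density (- s - b) * (-1)) (at b)"
    by (rule DERIV_chain2[OF DERIV_Phi]) (auto intro!: derivative_eq_intros)
  have 2: "((\<lambda>b. Phi (- s + b)) has_real_derivative std_normal_density (- s + b) * 1) (at b)"
    by (rule DERIV_chain2[OF DERIV_Phi]) (auto intro!: derivative_eq_intros)
  have "- s - b = - (b + s)" by simp
  then have "std_normal_density (- s - b) = std_normal_density (b + s)"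
    by (metis std_even)
  then show ?thesis using DERIV_add[OF 1 2] unfolding g_def by (simp add: algebra_simps)
qed

lemma cont_g: "continuous_on A (\<lambda>b. g s b)"
  using DERIV_g by (meson DERIV_isCont continuous_at_imp_continuous_on)

lemma g_sym: "g s (- b) = g s b"
proof -
  have e: "- s - - b = - s + b" "- s + - b = - s - b" by simp_all
  show ?thesis unfolding g_def e by (rule add.commute)
qed

lemma g_mono_b:
  assumes "0 \<le> s" "0 \<le> b" "b \<le> b'"
  shows "g s b \<le> g s b'"
proof (rule DERIV_nonneg_imp_increasing_open[OF assms(3) _ cont_g])
  fix x assume "b < x" "x < b'"
  then have "(x - s)\<^sup>2 \<le> (x + s)\<^sup>2" using assms by (simp add: power2_eq_square algebra_simps)
  then have "std_normal_density (x + s) \<le> std_normal_density (x - s)"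
    by (rule std_le)
  then show "\<exists>y. ((\<lambda>b. g s b) has_real_derivative y) (at x) \<and> 0 \<le> y"
    using DERIV_g by fastforce
qed

lemma g_strict_b:
  assumes "0 < s" "0 \<le> b" "b < b'"
  shows "g s b < g s b'"
proof (rule DERIV_pos_imp_increasing_open[OF assms(3) _ cont_g])
  fix x assume "b < x" "x < b'"
  then have "(x - s)\<^sup>2 < (x + s)\<^sup>2" using assms by (simp add: power2_eq_square algebra_simps)
  then have "std_normal_density (x + s) < std_normal_density (x - s)"
    by (rule std_less)
  then show "\<exists>y. ((\<lambda>b. g s b) has_real_derivative y) (at x) \<and> 0 < y"
    using DERIV_g by fastforce
qed

lemma Phi_mono: "a \<le> b \<Longrightarrow> Phi a \<le> Phi b"
  using Phi_strict_mono[of a b] by (cases "a = b") auto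

lemma g_strict_s: "s < s' \<Longrightarrow> g s' b < g s b"
  unfolding g_def using Phi_strict_mono[of "- s' - b" "- s - b"] Phi_strict_mono[of "- s' + b" "- s + b"]
  by simp

lemma g_opt:
  assumes "s \<le> s0" "0 < s0" "g s b \<le> g s0 0"
  shows "s = s0 \<and> b = 0"
proof -
  have gb: "g t 0 \<le> g t b" if "0 \<le> t" for t
    using g_mono_b[OF that, of 0 "\<bar>b\<bar>"] g_sym[of t b] by (cases "b \<ge> 0") auto
  have "s = s0"
  proof (rule ccontr)
    assume "s \<noteq> s0" then have "s < s0" using assms by simp
    show False
    proof (cases "0 \<le> s")
      case True
      then show False using gb[OF True] g_strict_s[OF \<open>s < s0\<close>, of 0] assms by simp
    next
      case False
      then show False using gb[of 0] g_strict_s[of s 0 b] g_strict_s[OF assms(2), of 0] assms by simp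
    qed
  qed
  moreover have "b = 0"
  proof (rule ccontr)
    assume "b \<noteq> 0"
    then have "g s0 0 < g s0 \<bar>b\<bar>" using g_strict_b[OF assms(2), of 0 "\<bar>b\<bar>"] by simp
    moreover have "g s0 \<bar>b\<bar> = g s0 b" using g_sym[of s0 b] by (cases "b \<ge> 0") auto
    ultimately show False using assms \<open>s = s0\<close> by simp
  qed
  ultimately show ?thesis by simp
qed


lemma space_cond: "space (cond_dist eta y :: ('n::finite \<Rightarrow> real) measure) = UNIV"
  unfolding cond_dist_def by (simp add: space_PiM)

lemma prob_cond: "prob_space (cond_dist eta y :: ('n::finite \<Rightarrow> real) measure)"
  unfolding cond_dist_def
  by (intro prob_space_PiM) (rule prob_space_normal_density, simp)

lemma dist_inner:
  fixes w :: "'n::finite \<Rightarrow> real"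
  assumes "l2norm w = 1"
  shows "distributed (cond_dist eta y) lborel (inner_f w) (normal_density (y * eta * sum w UNIV) 1)"
proof -
  define N where "N = density lborel (normal_density (y * eta) 1)"
  define M where "M = (cond_dist eta y :: ('n \<Rightarrow> real) measure)"
  have MN: "M = PiM UNIV (\<lambda>i. N)" unfolding M_def N_def cond_dist_def by simp
  interpret N: prob_space N unfolding N_def by (rule prob_space_normal_density) simp
  interpret P: product_prob_space "\<lambda>i. N" UNIV ..
  interpret M: prob_space M unfolding M_def by (rule prob_cond)
  have setsN: "sets N = sets borel" unfolding N_def by simp
  have comp: "distr M borel (\<lambda>x. x i) = N" for i
  proof -
    have "distr M borel (\<lambda>x. x i) = distr M N (\<lambda>x. x i)"
      by (rule distr_cong) (auto simp: setsN)
    also have "\<dots> = N" unfolding MN by (rule P.PiM_component) simp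
    finally show ?thesis .
  qed
  have dcomp: "distributed M lborel (\<lambda>x. x i) (normal_density (y * eta) 1)" for i
  proof -
    have "distr M lborel (\<lambda>x. x i) = distr M borel (\<lambda>x. x i)"
      by (rule distr_cong) auto
    then show ?thesis unfolding distributed_def using comp[of i]
      by (auto simp: N_def MN)
  qed
  have ind: "M.indep_vars (\<lambda>i. borel) (\<lambda>i x. x i) UNIV"
  proof (subst M.indep_vars_iff_distr_eq_PiM)
    show "(\<lambda>x::'n\<Rightarrow>real. x i) \<in> measurable M borel" for i :: 'n
    proof -
      have "(\<lambda>x. x i) \<in> measurable M N" unfolding MN by (rule measurable_component_singleton) simp
      moreover have "measurable M N = measurable M borel" by (rule measurable_cong_sets) (auto simp: setsN)
      ultimately show ?thesis by simp
    qed
    have "distr M (Pi\<^sub>M UNIV (\<lambda>i. borel)) (\<lambda>x. \<lambda>i\<in>UNIV. x i) = distr M (Pi\<^sub>M UNIV (\<lambda>i. borel)) (\<lambda>x. x)"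
      by (rule distr_cong) auto
    also have "\<dots> = M" unfolding MN
      by (rule distr_id2) (intro sets_PiM_cong; simp add: setsN)
    also have "\<dots> = (\<Pi>\<^sub>M i\<in>UNIV. distr M borel (\<lambda>x. x i))"
      by (subst comp) (rule MN)
    finally show "distr M (Pi\<^sub>M UNIV (\<lambda>i. borel)) (\<lambda>x. \<lambda>i\<in>UNIV. x i) = (\<Pi>\<^sub>M i\<in>UNIV. distr M borel (\<lambda>x. x i))" .
  qed simp
  define I where "I = {i. w i \<noteq> 0}"
  have "I \<noteq> {}"
  proof
    assume "I = {}"
    then have "\<forall>i. w i = 0" unfolding I_def by auto
    then show False using assms by (simp add: l2norm_def)
  qed
  have ind2: "M.indep_vars (\<lambda>i. borel) (\<lambda>i x. w i * x i) I"
    using M.indep_vars_compose2[OF ind, of "\<lambda>i t. w i * t" "\<lambda>i. borel"]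
    by (auto intro: M.indep_vars_subset)
  have dI: "distributed M lborel (\<lambda>x. w i * x i) (normal_density (w i * (y * eta)) (\<bar>w i\<bar>))"
    if "i \<in> I" for i
    using M.normal_density_affine[OF dcomp[of i], of "w i" 0] that by (simp add: I_def)
  have S: "distributed M lborel (\<lambda>x. \<Sum>i\<in>I. w i * x i)
      (normal_density (\<Sum>i\<in>I. w i * (y * eta)) (sqrt (\<Sum>i\<in>I. (\<bar>w i\<bar>)\<^sup>2)))"
    by (rule M.sum_indep_normal[OF _ \<open>I \<noteq> {}\<close> ind2]) (auto simp: I_def intro: dI)
  have e1: "(\<Sum>i\<in>I. w i * x i) = inner_f w x" for x
    unfolding inner_f_def I_def by (rule sum.mono_neutral_left) auto
  have e2: "(\<Sum>i\<in>I. w i * (y * eta)) = y * eta * sum w UNIV"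
  proof -
    have "(\<Sum>i\<in>I. w i * (y * eta)) = (\<Sum>i\<in>UNIV. w i * (y * eta))"
      unfolding I_def by (rule sum.mono_neutral_left) auto
    then show ?thesis by (simp add: sum_distrib_right[symmetric] mult.commute)
  qed
  have e3: "sqrt (\<Sum>i\<in>I. (\<bar>w i\<bar>)\<^sup>2) = 1"
  proof -
    have "(\<Sum>i\<in>I. (\<bar>w i\<bar>)\<^sup>2) = (\<Sum>i\<in>I. (w i)\<^sup>2)" by simp
    also have "\<dots> = (\<Sum>i\<in>UNIV. (w i)\<^sup>2)"
      unfolding I_def by (rule sum.mono_neutral_left) auto
    finally have "(\<Sum>i\<in>I. (\<bar>w i\<bar>)\<^sup>2) = (\<Sum>i\<in>UNIV. (w i)\<^sup>2)" .
    then show ?thesis using assms by (simp add: l2norm_def)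
  qed
  show ?thesis using S unfolding e2 e3 unfolding e1 M_def by simp
qed


lemma distributed_meas:
  assumes "distributed M lborel X f" "A \<in> sets borel"
  shows "measure (density lborel f) A = measure M (X -` A \<inter> space M)"
proof -
  have "density lborel f = distr M lborel X" using assms(1) unfolding distributed_def by simp
  moreover have "X \<in> measurable M lborel" using assms(1) unfolding distributed_def by simp
  ultimately show ?thesis using assms(2) by (simp add: measure_distr)
qed

lemma std_dist: "distributed (density lborel std_normal_density) lborel (\<lambda>x. x) std_normal_density"
  unfolding distributed_def
  by (auto simp: distr_id2)

lemma meas_le: "measure (density lborel (normal_density m 1)) {..c} = Phi (c - m)"
proof -
  interpret S: prob_space "density lborel std_normal_density" by (rule std_prob)
  have D: "distributed (density lborel std_normal_density) lborel (\<lambda>x. m + 1 * x) (normal_density (m + 1 * 0) (\<bar>1\<bar> * 1))"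
    by (rule S.normal_density_affine[OF std_dist]) auto
  have "(\<lambda>x. m + 1 * x) -` {..c} \<inter> space (density lborel std_normal_density) = {..c - m}"
    by auto
  then show ?thesis using distributed_meas[OF D, of "{..c}"] by (simp add: Phi_def)
qed

lemma meas_ge: "measure (density lborel (normal_density m 1)) {c..} = Phi (m - c)"
proof -
  interpret S: prob_space "density lborel std_normal_density" by (rule std_prob)
  have D: "distributed (density lborel std_normal_density) lborel (\<lambda>x. m + (-1) * x) (normal_density (m + (-1) * 0) (\<bar>-1\<bar> * 1))"
    by (rule S.normal_density_affine[OF std_dist]) auto
  have "(\<lambda>x. m + (-1) * x) -` {c..} \<inter> space (density lborel std_normal_density) = {..m - c}"
    by auto
  then show ?thesis using distributed_meas[OF D, of "{c..}"] by (simp add: Phi_def)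
qed

lemma meas_inner_le:
  fixes w :: "'n::finite \<Rightarrow> real"
  assumes "l2norm w = 1"
  shows "measure (cond_dist eta y) {x. inner_f w x \<le> c} = Phi (c - y * eta * sum w UNIV)"
proof -
  have "inner_f w -` {..c} \<inter> space (cond_dist eta y :: ('n \<Rightarrow> real) measure) = {x. inner_f w x \<le> c}"
    by (auto simp: space_cond)
  then show ?thesis using distributed_meas[OF dist_inner[OF assms, of eta y], of "{..c}"] meas_le by simp
qed

lemma meas_inner_ge:
  fixes w :: "'n::finite \<Rightarrow> real"
  assumes "l2norm w = 1"
  shows "measure (cond_dist eta y) {x. inner_f w x \<ge> c} = Phi (y * eta * sum w UNIV - c)"
proof -
  have "inner_f w -` {c..} \<inter> space (cond_dist eta y :: ('n \<Rightarrow> real) measure) = {x. inner_f w x \<ge> c}"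
    by (auto simp: space_cond)
  then show ?thesis using distributed_meas[OF dist_inner[OF assms, of eta y], of "{c..}"] meas_ge by simp
qed

lemma nat_pos:
  fixes w :: "'n::finite \<Rightarrow> real"
  assumes "l2norm w = 1"
  shows "nat_err_cond eta w b 1 = Phi (- b - eta * sum w UNIV)"
proof -
  have "{x. lin_clf w b x \<noteq> 1} = {x. inner_f w x \<le> - b}"
    by (auto simp: lin_clf_def sgn_if)
  then show ?thesis unfolding nat_err_cond_def using meas_inner_le[OF assms, of eta 1 "- b"] by simp
qed

lemma nat_neg:
  fixes w :: "'n::finite \<Rightarrow> real"
  assumes "l2norm w = 1"
  shows "nat_err_cond eta w b (-1) = Phi (b - eta * sum w UNIV)"
proof -
  have "{x. lin_clf w b x \<noteq> -1} = {x. inner_f w x \<ge> - b}"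
    by (auto simp: lin_clf_def sgn_if)
  then show ?thesis unfolding nat_err_cond_def using meas_inner_ge[OF assms, of eta "-1" "- b"] by simp
qed


definition L1 :: "('n::finite \<Rightarrow> real) \<Rightarrow> real" where
  "L1 w = (\<Sum>i\<in>UNIV. \<bar>w i\<bar>)"

lemma inner_add: "inner_f w (\<lambda>i. x i + d i) = inner_f w x + inner_f w d"
  unfolding inner_f_def by (simp add: distrib_left sum.distrib)

lemma linf_ge: "\<bar>d i\<bar> \<le> linf_norm (d :: 'n::finite \<Rightarrow> real)"
  unfolding linf_norm_def by (rule Max_ge) auto

lemma inner_bound:
  fixes w d :: "'n::finite \<Rightarrow> real"
  assumes "linf_norm d \<le> e"
  shows "\<bar>inner_f w d\<bar> \<le> e * L1 w"
proof -
  have "\<bar>inner_f w d\<bar> \<le> (\<Sum>i\<in>UNIV. \<bar>w i * d i\<bar>)"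
    unfolding inner_f_def by (rule sum_abs)
  also have "\<dots> \<le> (\<Sum>i\<in>UNIV. \<bar>w i\<bar> * e)"
  proof (rule sum_mono)
    fix i
    have "\<bar>d i\<bar> \<le> e" using linf_ge[of d i] assms by simp
    then show "\<bar>w i * d i\<bar> \<le> \<bar>w i\<bar> * e" by (simp add: abs_mult mult_left_mono)
  qed
  also have "\<dots> = e * L1 w" unfolding L1_def by (simp add: sum_distrib_left mult.commute)
  finally show ?thesis .
qed

lemma witness_norm:
  fixes w :: "'n::finite \<Rightarrow> real"
  shows "linf_norm (\<lambda>i. c * sgn (w i)) \<le> \<bar>c\<bar>"
  unfolding linf_norm_def
  by (subst Max_le_iff) (auto simp: abs_mult sgn_if)

lemma witness_inner:
  fixes w :: "'n::finite \<Rightarrow> real"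
  shows "inner_f w (\<lambda>i. c * sgn (w i)) = c * L1 w"
  unfolding inner_f_def L1_def sum_distrib_left
  by (rule sum.cong) (auto simp: sgn_if)

lemma rob_pos:
  fixes w :: "'n::finite \<Rightarrow> real"
  assumes "l2norm w = 1" "0 \<le> e"
  shows "rob_err_cond eta e w b 1 = Phi (e * L1 w - b - eta * sum w UNIV)"
proof -
  have "{x. \<exists>d. linf_norm d \<le> e \<and> lin_clf w b (\<lambda>i. x i + d i) \<noteq> 1} = {x. inner_f w x \<le> e * L1 w - b}"
  proof (intro set_eqI iffI; simp)
    fix x assume "\<exists>d. linf_norm d \<le> e \<and> lin_clf w b (\<lambda>i. x i + d i) \<noteq> 1"
    then obtain d where "linf_norm d \<le> e" "lin_clf w b (\<lambda>i. x i + d i) \<noteq> 1" by blast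
    then show "inner_f w x \<le> e * L1 w - b"
      using inner_bound[of d e w] by (auto simp: lin_clf_def inner_add sgn_if split: if_splits)
  next
    fix x assume "inner_f w x \<le> e * L1 w - b"
    moreover have "linf_norm (\<lambda>i. (- e) * sgn (w i)) \<le> e"
      using witness_norm[of "- e" w] assms(2) by simp
    moreover have "inner_f w (\<lambda>i. x i + (- e) * sgn (w i)) = inner_f w x - e * L1 w"
      using inner_add[of w x "\<lambda>i. (- e) * sgn (w i)"] witness_inner[of w "- e"] by simp
    ultimately show "\<exists>d. linf_norm d \<le> e \<and> lin_clf w b (\<lambda>i. x i + d i) \<noteq> 1"
      by (intro exI[of _ "\<lambda>i. (- e) * sgn (w i)"]) (auto simp: lin_clf_def sgn_if)
  qed
  then show ?thesis unfolding rob_err_cond_def using meas_inner_le[OF assms(1), of eta 1 "e * L1 w - b"]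
    by simp
qed

lemma rob_neg:
  fixes w :: "'n::finite \<Rightarrow> real"
  assumes "l2norm w = 1" "0 \<le> e"
  shows "rob_err_cond eta e w b (-1) = Phi (b + e * L1 w - eta * sum w UNIV)"
proof -
  have "{x. \<exists>d. linf_norm d \<le> e \<and> lin_clf w b (\<lambda>i. x i + d i) \<noteq> -1} = {x. inner_f w x \<ge> - b - e * L1 w}"
  proof (intro set_eqI iffI; simp)
    fix x assume "\<exists>d. linf_norm d \<le> e \<and> lin_clf w b (\<lambda>i. x i + d i) \<noteq> -1"
    then obtain d where "linf_norm d \<le> e" "lin_clf w b (\<lambda>i. x i + d i) \<noteq> -1" by blast
    then show "- b - e * L1 w \<le> inner_f w x"
      using inner_bound[of d e w] by (auto simp: lin_clf_def inner_add sgn_if split: if_splits)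
  next
    fix x assume "- b - e * L1 w \<le> inner_f w x"
    moreover have "linf_norm (\<lambda>i. e * sgn (w i)) \<le> e"
      using witness_norm[of e w] assms(2) by simp
    moreover have "inner_f w (\<lambda>i. x i + e * sgn (w i)) = inner_f w x + e * L1 w"
      by (simp add: inner_add witness_inner)
    ultimately show "\<exists>d. linf_norm d \<le> e \<and> lin_clf w b (\<lambda>i. x i + d i) \<noteq> -1"
      by (intro exI[of _ "\<lambda>i. e * sgn (w i)"]) (auto simp: lin_clf_def sgn_if)
  qed
  then show ?thesis unfolding rob_err_cond_def using meas_inner_ge[OF assms(1), of eta "-1" "- b - e * L1 w"]
    by (simp add: algebra_simps)
qed


lemma sumsq_one:
  fixes w :: "'n::finite \<Rightarrow> real"
  assumes "l2norm w = 1" shows "(\<Sum>i\<in>UNIV. (w i)\<^sup>2) = 1"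
  using assms unfolding l2norm_def by simp

lemma sum_le_L1: "sum w UNIV \<le> L1 (w :: 'n::finite \<Rightarrow> real)"
  unfolding L1_def by (rule sum_mono) simp

lemma L1_le:
  fixes w :: "'n::finite \<Rightarrow> real"
  assumes "l2norm w = 1" shows "L1 w \<le> sqrt (real CARD('n))"
proof -
  have "(L1 w)\<^sup>2 \<le> (\<Sum>i\<in>UNIV. (\<bar>w i\<bar>)\<^sup>2) * card (UNIV :: 'n set)"
    unfolding L1_def by (rule sum_squared_le_sum_of_squares)
  also have "\<dots> = real CARD('n)" using sumsq_one[OF assms] by simp
  finally have "(L1 w)\<^sup>2 \<le> real CARD('n)" .
  moreover have "0 \<le> L1 w" unfolding L1_def by (simp add: sum_nonneg)
  ultimately show ?thesis by (simp add: real_le_rsqrt)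
qed

lemma nat_err_g:
  fixes w :: "'n::finite \<Rightarrow> real"
  assumes "l2norm w = 1"
  shows "nat_err eta w b = g (eta * sum w UNIV) b / 2"
proof -
  have e: "- b - eta * sum w UNIV = - (eta * sum w UNIV) - b" "b - eta * sum w UNIV = - (eta * sum w UNIV) + b"
    by simp_all
  show ?thesis unfolding nat_err_def nat_pos[OF assms] nat_neg[OF assms] g_def e by simp
qed

lemma rob_err_g:
  fixes w :: "'n::finite \<Rightarrow> real"
  assumes "l2norm w = 1" "0 \<le> em" "0 \<le> ep"
  shows "rob_err eta em ep w b = g (eta * sum w UNIV - (ep + em) / 2 * L1 w) (b - (ep - em) / 2 * L1 w) / 2"
proof -
  have a: "ep * L1 w - b - eta * sum w UNIV = - (eta * sum w UNIV - (ep + em) / 2 * L1 w) - (b - (ep - em) / 2 * L1 w)"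
    by (auto simp: field_simps)
  have c: "b + em * L1 w - eta * sum w UNIV = - (eta * sum w UNIV - (ep + em) / 2 * L1 w) + (b - (ep - em) / 2 * L1 w)"
    by (auto simp: field_simps)
  show ?thesis
    unfolding rob_err_def rob_pos[OF assms(1,3)] rob_neg[OF assms(1,2)] g_def a c by simp
qed

theorem theorem3:
  fixes eta em ep bn br :: real and wn wr :: "'n::finite \<Rightarrow> real"
  assumes "eta > 0" and "0 < em" and "em < ep" and "ep < eta"
    and "l2norm wn = 1"
    and "\<And>(w::'n \<Rightarrow> real) b. l2norm w = 1 \<Longrightarrow> nat_err eta wn bn \<le> nat_err eta w b"
    and "l2norm wr = 1"
    and "\<And>(w::'n \<Rightarrow> real) b. l2norm w = 1 \<Longrightarrow> rob_err eta em ep wr br \<le> rob_err eta em ep w b"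
  shows "nat_err_cond eta wn bn (-1) < nat_err_cond eta wr br (-1)
       \<and> nat_err_cond eta wn bn 1 > nat_err_cond eta wr br 1"
proof -
  define r where "r = sqrt (real CARD('n))"
  have r0: "0 < r" unfolding r_def by simp
  have rr: "r * r = real CARD('n)" unfolding r_def by simp
  define w0 where "w0 = (\<lambda>i::'n. 1 / r)"
  have w0n: "l2norm w0 = 1"
    unfolding l2norm_def w0_def using r0 rr by (simp add: power2_eq_square)
  have w0s: "sum w0 UNIV = r" unfolding w0_def using r0 rr by (simp add: field_simps)
  have w0L: "L1 w0 = r" unfolding w0_def L1_def using r0 rr by (simp add: field_simps)
  define k where "k = (ep + em) / 2"
  define s0 where "s0 = eta * r"
  have s0p: "0 < s0" unfolding s0_def using assms r0 by simp
  define sn where "sn = eta * sum wn UNIV"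
  have "sn \<le> s0" unfolding sn_def s0_def r_def
    using sum_le_L1[of wn] L1_le[OF assms(5)] assms(1) by (simp add: mult_left_mono)
  moreover have "g sn bn \<le> g s0 0"
    using assms(6)[OF w0n, of 0] unfolding nat_err_g[OF assms(5)] nat_err_g[OF w0n] sn_def s0_def w0s
    by simp
  ultimately have nopt: "sn = s0 \<and> bn = 0" using g_opt s0p by blast
  define ur where "ur = eta * sum wr UNIV - k * L1 wr"
  define cr where "cr = br - (ep - em) / 2 * L1 wr"
  define u0 where "u0 = (eta - k) * r"
  have em0: "0 \<le> em" and ep0: "0 \<le> ep" using assms by simp_all
  have kl: "k < eta" unfolding k_def using assms by simp
  have u0p: "0 < u0" unfolding u0_def using kl r0 by simp
  have sL: "eta * sum wr UNIV \<le> eta * L1 wr" using sum_le_L1[of wr] assms(1) by simp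
  have Lr: "L1 wr \<le> r" using L1_le[OF assms(7)] unfolding r_def .
  have "ur \<le> u0"
  proof -
    have "ur \<le> (eta - k) * L1 wr" unfolding ur_def using sL by (simp add: algebra_simps)
    also have "\<dots> \<le> u0" unfolding u0_def using kl Lr by (simp add: mult_left_mono)
    finally show ?thesis .
  qed
  moreover have "g ur cr \<le> g u0 0"
  proof -
    have "rob_err eta em ep wr br \<le> rob_err eta em ep w0 ((ep - em) / 2 * r)"
      by (rule assms(8)[OF w0n])
    moreover have "rob_err eta em ep w0 ((ep - em) / 2 * r) = g u0 0 / 2"
      unfolding rob_err_g[OF w0n em0 ep0] using assms w0s w0L
      by (simp add: u0_def k_def algebra_simps)
    moreover have "rob_err eta em ep wr br = g ur cr / 2"
      unfolding rob_err_g[OF assms(7) em0 ep0] using assms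
      by (simp add: ur_def cr_def k_def)
    ultimately show ?thesis by simp
  qed
  ultimately have ropt: "ur = u0 \<and> cr = 0" using g_opt u0p by blast
  have "(eta - k) * r \<le> (eta - k) * L1 wr"
    using ropt sL unfolding ur_def u0_def by (simp add: algebra_simps)
  then have "r \<le> L1 wr" using kl by simp
  then have Lw: "L1 wr = r" using Lr by simp
  then have sr: "eta * sum wr UNIV = s0" using ropt unfolding ur_def u0_def s0_def
    by (simp add: algebra_simps)
  have brv: "br = (ep - em) / 2 * r" using ropt Lw unfolding cr_def by simp
  have "0 < (ep - em) / 2 * r" using assms r0 by simp
  then have brp: "0 < br" using brv by simp
  have "nat_err_cond eta wn bn (-1) = Phi (- s0)"
    using nat_neg[OF assms(5)] nopt unfolding sn_def by simp
  moreover have "nat_err_cond eta wr br (-1) = Phi (br - s0)"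
    using nat_neg[OF assms(7)] sr by simp
  moreover have "nat_err_cond eta wn bn 1 = Phi (- s0)"
    using nat_pos[OF assms(5)] nopt unfolding sn_def by simp
  moreover have "nat_err_cond eta wr br 1 = Phi (- br - s0)"
    using nat_pos[OF assms(7)] sr by simp
  ultimately show ?thesis
    using Phi_strict_mono[of "- s0" "br - s0"] Phi_strict_mono[of "- br - s0" "- s0"] brp by simp
qed

end
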